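(* Let $n \geq 4$, let $A$ be an $n\times n$ real matrix with $\mathrm{Tr}(AA^t)=n$, let $O$ be Haar distributed on $O(n,\mathbb{R})$, and for $t>0$ let $O'$ be obtained from $O$ by running the heat kernel on $O(n,\mathbb{R})$ for time $t$. Let $W = \mathrm{Tr}(AO)$ and $W' = \mathrm{Tr}(AO')$. Then, as $t \to 0$: (1) $\mathbb{E}(W'-W)^2 = t(n-1) + O(t^2)$; (2) $\mathbb{E}(W'-W)^4 = O(t^2)$; (3) $\mathbb{E}|W'-W|^3 = O(t^{3/2})$.
   Context: The Laplacian on $O(n,\mathbb{R})$ is $\Delta = \frac12\sum_{1\le i<j\le n} X_{ij}^2$, where $X_{ij}$ is the left-invariant vector field $X_{ij}f(O) = \frac{d}{ds}\big|_{s=0} f(O e^{s(E_{ij}-E_{ji})})$ and $E_{ij}$ are the matrix units. The heat kernel $K(t,x,y)$ is the kernel of $e^{t\Delta}$ with respect to Haar measure: $(e^{t\Delta}\phi)(x) = \int K(t,x,y)\phi(y)\,dy$; it is nonnegative, symmetric and integrates to $1$ in $y$. "Running the heat kernel for time $t$" means $O'$ has conditional law $K(t,O,y)\,dy$ given $O$, so $\mathbb{E}[\phi(O')\mid O] = (e^{t\Delta}\phi)(O)$. *)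

theory Defs
  imports "HOL-Analysis.Analysis" "HOL-Probability.Probability" "HOL-Library.Landau_Symbols"
begin

text \<open>The one-parameter subgroup exp(s(E_ij - E_ji)) written out explicitly:
  the identity except for entries (i,i)=(j,j)=cos s, (i,j)=sin s, (j,i)=-sin s (i \<noteq> j).\<close>
definition rot :: "'n::finite \<Rightarrow> 'n \<Rightarrow> real \<Rightarrow> real^'n^'n" where
  "rot i j s = (\<chi> k l.
      if k = i \<and> l = i then cos s
      else if k = j \<and> l = j then cos s
      else if k = i \<and> l = j then sin s
      else if k = j \<and> l = i then - sin s
      else if k = l then 1 else 0)"

definition Xsq :: "'n::finite \<Rightarrow> 'n \<Rightarrow> (real^'n^'n \<Rightarrow> real) \<Rightarrow> real^'n^'n \<Rightarrow> real" where
  "Xsq i j f Q = deriv (deriv (\<lambda>s. f (Q ** rot i j s))) 0"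

text \<open>Laplacian 1/2 sum_{i<j} X_ij^2; since X_ji = -X_ij, this equals 1/4 sum_{i \<noteq> j} X_ij^2.\<close>
definition laplacian :: "(real^'n::finite^'n \<Rightarrow> real) \<Rightarrow> real^'n^'n \<Rightarrow> real" where
  "laplacian f Q = (1/4) * (\<Sum>(i,j)\<in>{(i,j). i \<noteq> j}. Xsq i j f Q)"

definition Orth :: "(real^'n::finite^'n) set" where
  "Orth = {Q. orthogonal_matrix Q}"

text \<open>Haar probability measure on O(n): a probability measure on the Borel sets of the
  matrix space, concentrated on O(n), invariant under left translation by O(n)
  (this characterises Haar measure uniquely).\<close>
definition haar_measure :: "(real^'n::finite^'n) measure \<Rightarrow> bool" where
  "haar_measure M \<longleftrightarrow> prob_space M \<and> sets M = sets borel \<and> measure M Orth = 1 \<and>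
     (\<forall>g\<in>Orth. distr M M (\<lambda>x. g ** x) = M)"

text \<open>Monomials in the matrix entries; their linear span is the algebra of polynomial
  functions, dense in C(O(n)), so they determine the heat semigroup.\<close>
definition monomial_fun :: "(real^'n::finite^'n \<Rightarrow> real) \<Rightarrow> bool" where
  "monomial_fun f \<longleftrightarrow> (\<exists>m a b. f = (\<lambda>x. \<Prod>k<(m::nat). x $ a k $ b k))"

definition heat_kernel :: "(real^'n::finite^'n) measure \<Rightarrow>
    (real \<Rightarrow> real^'n^'n \<Rightarrow> real^'n^'n \<Rightarrow> real) \<Rightarrow> bool" where
  "heat_kernel M K \<longleftrightarrow>
     (\<forall>t>0. (\<lambda>(x,y). K t x y) \<in> borel_measurable (M \<Otimes>\<^sub>M M)) \<and>
     (\<forall>t>0. \<forall>x\<in>Orth. \<forall>y\<in>Orth. K t x y \<ge> 0 \<and> K t x y = K t y x) \<and>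
     (\<forall>t>0. \<forall>x\<in>Orth. integrable M (K t x) \<and> (\<integral>y. K t x y \<partial>M) = 1) \<and>
     (\<forall>\<phi>. monomial_fun \<phi> \<longrightarrow> (\<forall>x\<in>Orth.
        (\<forall>t>0. ((\<lambda>s. \<integral>y. K s x y * \<phi> y \<partial>M) has_real_derivative
                   (\<integral>y. K t x y * laplacian \<phi> y \<partial>M)) (at t)) \<and>
        ((\<lambda>s. \<integral>y. K s x y * \<phi> y \<partial>M) \<longlongrightarrow> \<phi> x) (at_right 0)))"

end

theory Submission
  imports Defs
begin


inductive poly_fun :: "(real^'n::finite^'n \<Rightarrow> real) \<Rightarrow> bool" where
  pmono: "monomial_fun f \<Longrightarrow> poly_fun f"
| padd: "poly_fun f \<Longrightarrow> poly_fun g \<Longrightarrow> poly_fun (\<lambda>x. f x + g x)"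
| psmult: "poly_fun f \<Longrightarrow> poly_fun (\<lambda>x. c * f x)"

lemma prod_lessThan_add:
  "(\<Prod>k<m+m'. (c::nat\<Rightarrow>real) k) = (\<Prod>k<m. c k) * (\<Prod>k<m'. c (m+k))"
  by (induction m') (auto simp: mult.assoc)

lemma monomial_mult:
  fixes f g :: "real^'n::finite^'n \<Rightarrow> real"
  assumes "monomial_fun f" "monomial_fun g" shows "monomial_fun (\<lambda>x. f x * g x)"
proof -
  obtain m and a b :: "nat \<Rightarrow> 'n" where f: "f = (\<lambda>x. \<Prod>k<m. x $ a k $ b k)"
    using assms(1) unfolding monomial_fun_def by blast
  obtain m' and a' b' :: "nat \<Rightarrow> 'n" where g: "g = (\<lambda>x. \<Prod>k<m'. x $ a' k $ b' k)"
    using assms(2) unfolding monomial_fun_def by blast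
  define a2 where "a2 = (\<lambda>k. if k < m then a k else a' (k - m))"
  define b2 where "b2 = (\<lambda>k. if k < m then b k else b' (k - m))"
  have "(\<lambda>x. f x * g x) = (\<lambda>x. \<Prod>k<m+m'. x $ a2 k $ b2 k)"
    by (simp add: f g prod_lessThan_add a2_def b2_def)
  thus ?thesis unfolding monomial_fun_def by blast
qed

lemma monomial_one: "monomial_fun (\<lambda>x. 1)"
  unfolding monomial_fun_def by (rule exI[of _ 0]) auto

lemma monomial_coord: "monomial_fun (\<lambda>x. x $ a $ b)"
  unfolding monomial_fun_def by (rule exI[of _ 1]) auto

lemma pconst: "poly_fun (\<lambda>x. c)"
  using psmult[OF pmono[OF monomial_one], of c] by simp

lemma pcoord: "poly_fun (\<lambda>x. x $ a $ b)"
  by (rule pmono[OF monomial_coord])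

lemma pmult_mono:
  assumes "poly_fun g" "monomial_fun f" shows "poly_fun (\<lambda>x. f x * g x)"
  using assms(1)
proof induction
  case (pmono g) thus ?case by (intro poly_fun.pmono monomial_mult assms(2))
next
  case (padd g1 g2)
  have "(\<lambda>x. f x * (g1 x + g2 x)) = (\<lambda>x. f x * g1 x + f x * g2 x)" by (simp add: algebra_simps)
  thus ?case using padd by (simp add: poly_fun.padd)
next
  case (psmult g c)
  have "(\<lambda>x. f x * (c * g x)) = (\<lambda>x. c * (f x * g x))" by (simp add: algebra_simps)
  thus ?case using psmult by (simp add: poly_fun.psmult)
qed

lemma pmult:
  assumes "poly_fun f" "poly_fun g" shows "poly_fun (\<lambda>x. f x * g x)"
  using assms(1)
proof induction
  case (pmono f) thus ?case by (intro pmult_mono assms(2))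
next
  case (padd f1 f2)
  have "(\<lambda>x. (f1 x + f2 x) * g x) = (\<lambda>x. f1 x * g x + f2 x * g x)" by (simp add: algebra_simps)
  thus ?case using padd by (simp add: poly_fun.padd)
next
  case (psmult f c)
  have "(\<lambda>x. (c * f x) * g x) = (\<lambda>x. c * (f x * g x))" by (simp add: algebra_simps)
  thus ?case using psmult by (simp add: poly_fun.psmult)
qed

lemma pminus: "poly_fun f \<Longrightarrow> poly_fun (\<lambda>x. - f x)"
  using psmult[of f "-1"] by simp

lemma pdiff: "poly_fun f \<Longrightarrow> poly_fun g \<Longrightarrow> poly_fun (\<lambda>x. f x - g x)"
  using padd[OF _ pminus, of f g] by simp

lemma ppow: "poly_fun f \<Longrightarrow> poly_fun (\<lambda>x. f x ^ k)"
  by (induction k) (auto intro: pconst pmult)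

lemma psum: "(\<And>i. i \<in> I \<Longrightarrow> poly_fun (f i)) \<Longrightarrow> poly_fun (\<lambda>x. \<Sum>i\<in>I. f i x)"
proof (induction I rule: infinite_finite_induct)
  case (insert i I) thus ?case using padd[of "f i" "\<lambda>x. \<Sum>i\<in>I. f i x"] by simp
qed (auto intro: pconst)

lemma orth_entry_bound:
  assumes "orthogonal_matrix (Q::real^'n::finite^'n)" shows "\<bar>Q $ a $ b\<bar> \<le> 1"
proof -
  have "(Q ** transpose Q) $ a $ a = 1" using assms unfolding orthogonal_matrix_def by (simp add: mat_def)
  hence s: "(\<Sum>k\<in>UNIV. Q $ a $ k * Q $ a $ k) = 1"
    by (simp add: matrix_matrix_mult_def transpose_def)
  have "Q $ a $ b * Q $ a $ b \<le> (\<Sum>k\<in>UNIV. Q $ a $ k * Q $ a $ k)"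
    by (rule member_le_sum) auto
  hence "\<bar>Q $ a $ b\<bar>^2 \<le> 1^2" using s by (simp add: power2_eq_square)
  thus ?thesis by (rule power2_le_imp_le) simp
qed

lemma poly_bounded:
  fixes f :: "real^'n::finite^'n \<Rightarrow> real"
  assumes "poly_fun f" shows "\<exists>B. \<forall>Q\<in>Orth. \<bar>f Q\<bar> \<le> B"
  using assms
proof induction
  case (pmono f)
  then obtain m and a b :: "nat \<Rightarrow> 'n" where f: "f = (\<lambda>x. \<Prod>k<m. x $ a k $ b k)" unfolding monomial_fun_def by blast
  have "\<bar>f Q\<bar> \<le> 1" if "Q \<in> Orth" for Q
    using that unfolding f abs_prod Orth_def
    by (intro prod_le_1) (auto intro: orth_entry_bound)
  thus ?case by blast
next
  case (padd f g)
  then obtain B1 B2 where "\<forall>Q\<in>Orth. \<bar>f Q\<bar> \<le> B1" "\<forall>Q\<in>Orth. \<bar>g Q\<bar> \<le> B2" by blast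
  hence "\<forall>Q\<in>Orth. \<bar>f Q + g Q\<bar> \<le> B1 + B2" by (smt (verit))
  thus ?case by blast
next
  case (psmult f c)
  then obtain B1 where B1: "\<forall>Q\<in>Orth. \<bar>f Q\<bar> \<le> B1" by blast
  hence "\<forall>Q\<in>Orth. \<bar>c * f Q\<bar> \<le> \<bar>c\<bar> * B1" by (simp add: abs_mult mult_left_mono)
  thus ?case by blast
qed

lemma poly_continuous: "poly_fun (f :: real^'n::finite^'n \<Rightarrow> real) \<Longrightarrow> continuous_on UNIV f"
proof (induction rule: poly_fun.induct)
  case (pmono f)
  then obtain m and a b :: "nat \<Rightarrow> 'n" where f: "f = (\<lambda>x. \<Prod>k<m. x $ a k $ b k)" unfolding monomial_fun_def by blast
  show ?case unfolding f by (intro continuous_intros)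
qed (auto intro: continuous_intros)

lemma poly_borel: "poly_fun f \<Longrightarrow> f \<in> borel_measurable borel"
  by (intro borel_measurable_continuous_onI poly_continuous)

lemma sum_two_if:
  fixes x y :: "'n::finite \<Rightarrow> real"
  assumes "i \<noteq> j"
  shows "(\<Sum>m\<in>UNIV. (if m = i then x m else if m = j then y m else 0)) = x i + y j"
proof -
  have "(\<Sum>m\<in>UNIV. (if m = i then x m else if m = j then y m else 0))
      = (\<Sum>m\<in>UNIV. (if m = i then x m else 0) + (if m = j then y m else 0))"
    by (rule sum.cong) (use assms in auto)
  also have "\<dots> = x i + y j" by (simp add: sum.distrib)
  finally show ?thesis .
qed

lemma rot_entry:
  fixes Q :: "real^'n::finite^'n"
  assumes "i \<noteq> j"
  shows "(Q ** rot i j s) $ a $ b =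
    (if b = i then Q$a$i * cos s - Q$a$j * sin s
     else if b = j then Q$a$i * sin s + Q$a$j * cos s else Q$a$b)"
proof -
  have e: "(Q ** rot i j s) $ a $ b = (\<Sum>m\<in>UNIV. Q$a$m * rot i j s $ m $ b)"
    by (simp add: matrix_matrix_mult_def)
  show ?thesis
  proof (cases "b = i")
    case True
    have "(\<Sum>m\<in>UNIV. Q$a$m * rot i j s $ m $ b)
       = (\<Sum>m\<in>UNIV. (if m = i then Q$a$m * cos s else if m = j then Q$a$m * (- sin s) else 0))"
      by (rule sum.cong) (use assms True in \<open>auto simp: rot_def\<close>)
    thus ?thesis using e True assms by (simp add: sum_two_if)
  next
    case F1: False
    show ?thesis
    proof (cases "b = j")
      case True
      have "(\<Sum>m\<in>UNIV. Q$a$m * rot i j s $ m $ b)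
         = (\<Sum>m\<in>UNIV. (if m = i then Q$a$m * sin s else if m = j then Q$a$m * cos s else 0))"
        by (rule sum.cong) (use assms True in \<open>auto simp: rot_def\<close>)
      thus ?thesis using e True F1 assms by (simp add: sum_two_if)
    next
      case False
      have "(\<Sum>m\<in>UNIV. Q$a$m * rot i j s $ m $ b) = (\<Sum>m\<in>UNIV. (if m = b then Q$a$m else 0))"
        by (rule sum.cong) (use assms False F1 in \<open>auto simp: rot_def\<close>)
      thus ?thesis using e False F1 by simp
    qed
  qed
qed

lemma rot_nth: "rot i j s $ k $ l = (if k = i \<and> l = i then cos s
      else if k = j \<and> l = j then cos s
      else if k = i \<and> l = j then sin s
      else if k = j \<and> l = i then - sin s
      else if k = l then 1 else 0)"
  unfolding rot_def by (simp only: vec_lambda_beta)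

lemma rot0: "rot i j 0 = mat 1"
proof -
  have m: "(mat 1 :: real^'a::finite^'a) $ k $ l = (if k = l then 1 else (0::real))" for k l
    by (simp add: mat_def)
  have "rot i j 0 $ k $ l = mat 1 $ k $ l" for k l
    unfolding rot_nth m
    by (cases "k=i"; cases "l=i"; cases "k=j"; cases "l=j"; simp del: cos_zero sin_zero; simp)
  thus ?thesis by (simp add: vec_eq_iff)
qed

definition dcoord :: "'n::finite \<Rightarrow> 'n \<Rightarrow> 'n \<Rightarrow> 'n \<Rightarrow> real^'n^'n \<Rightarrow> real" where
  "dcoord i j a b P = (if b = j then P$a$i else 0) - (if b = i then P$a$j else 0)"

definition hasD :: "'n::finite \<Rightarrow> 'n \<Rightarrow> (real^'n^'n \<Rightarrow> real) \<Rightarrow> (real^'n^'n \<Rightarrow> real) \<Rightarrow> bool" where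
  "hasD i j f g \<longleftrightarrow> (\<forall>Q s. ((\<lambda>s. f (Q ** rot i j s)) has_real_derivative g (Q ** rot i j s)) (at s))"

lemma hasD_coord:
  fixes i j :: "'n::finite"
  assumes "i \<noteq> j" shows "hasD i j (\<lambda>x. x $ a $ b) (dcoord i j a b)"
  unfolding hasD_def
proof (intro allI)
  fix Q :: "real^'n^'n" and s :: real
  show "((\<lambda>s. (Q ** rot i j s) $ a $ b) has_real_derivative dcoord i j a b (Q ** rot i j s)) (at s)"
  proof (cases "b = i")
    case True
    show ?thesis unfolding rot_entry[OF assms] dcoord_def using True assms
      by (auto intro!: derivative_eq_intros)
  next
    case F1: False
    show ?thesis
    proof (cases "b = j")
      case True
      show ?thesis unfolding rot_entry[OF assms] dcoord_def using True F1 assms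
        by (auto intro!: derivative_eq_intros)
    next
      case False
      show ?thesis unfolding rot_entry[OF assms] dcoord_def using False F1 assms
        by (auto intro!: derivative_eq_intros)
    qed
  qed
qed

lemma hasD_const: "hasD i j (\<lambda>x. c) (\<lambda>x. 0)"
  unfolding hasD_def by (auto intro!: derivative_eq_intros)

lemma hasD_add: "hasD i j f f' \<Longrightarrow> hasD i j g g' \<Longrightarrow> hasD i j (\<lambda>x. f x + g x) (\<lambda>x. f' x + g' x)"
  unfolding hasD_def by (auto intro!: derivative_eq_intros)

lemma hasD_smult: "hasD i j f f' \<Longrightarrow> hasD i j (\<lambda>x. c * f x) (\<lambda>x. c * f' x)"
  unfolding hasD_def by (auto intro!: derivative_eq_intros)

lemma hasD_mult: "hasD i j f f' \<Longrightarrow> hasD i j g g' \<Longrightarrow>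
   hasD i j (\<lambda>x. f x * g x) (\<lambda>x. f' x * g x + f x * g' x)"
  unfolding hasD_def by (auto intro!: derivative_eq_intros)

lemma hasD_sum: "(\<And>k. k \<in> I \<Longrightarrow> hasD i j (f k) (f' k)) \<Longrightarrow>
   hasD i j (\<lambda>x. \<Sum>k\<in>I. f k x) (\<lambda>x. \<Sum>k\<in>I. f' k x)"
proof (induction I rule: infinite_finite_induct)
  case (infinite A) thus ?case by (simp add: hasD_const)
next
  case empty thus ?case by (simp add: hasD_const)
next
  case (insert k I) thus ?case using hasD_add[of i j "f k" "f' k"] by simp
qed

lemma poly_dcoord: "poly_fun (dcoord i j a b)"
proof -
  have "dcoord i j a b = (\<lambda>x. (if b = j then x$a$i else 0) - (if b = i then x$a$j else 0))"
    by (simp add: dcoord_def[abs_def])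
  thus ?thesis by (cases "b = j"; cases "b = i") (auto intro!: pdiff pcoord pconst pminus)
qed

lemma hasD_monomial:
  fixes a b :: "nat \<Rightarrow> 'n::finite"
  assumes "i \<noteq> j"
  shows "\<exists>g. poly_fun g \<and> hasD i j (\<lambda>x. \<Prod>k<m. x $ a k $ b k) g"
proof (induction m)
  case 0 thus ?case using hasD_const[of i j 1] pconst[of 0] by auto
next
  case (Suc m)
  then obtain g where g: "poly_fun g" "hasD i j (\<lambda>x. \<Prod>k<m. x $ a k $ b k) g" by blast
  have "hasD i j (\<lambda>x. (\<Prod>k<m. x $ a k $ b k) * x $ a m $ b m)
     (\<lambda>x. g x * x $ a m $ b m + (\<Prod>k<m. x $ a k $ b k) * dcoord i j (a m) (b m) x)"
    by (rule hasD_mult[OF g(2) hasD_coord[OF assms]])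
  moreover have "poly_fun (\<lambda>x. g x * x $ a m $ b m + (\<Prod>k<m. x $ a k $ b k) * dcoord i j (a m) (b m) x)"
    by (intro padd pmult g(1) pcoord poly_dcoord pmono) (auto simp: monomial_fun_def)
  ultimately show ?case by auto
qed

lemma poly_hasD:
  fixes f :: "real^'n::finite^'n \<Rightarrow> real"
  assumes "poly_fun f" "i \<noteq> j"
  shows "\<exists>g. poly_fun g \<and> hasD i j f g"
  using assms(1)
proof induction
  case (pmono f)
  then obtain m and a b :: "nat \<Rightarrow> 'n" where f: "f = (\<lambda>x. \<Prod>k<m. x $ a k $ b k)"
    unfolding monomial_fun_def by blast
  show ?case unfolding f by (rule hasD_monomial[OF assms(2)])
next
  case (padd f g) thus ?case by (blast intro: poly_fun.padd hasD_add)
next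
  case (psmult f c) thus ?case by (blast intro: poly_fun.psmult hasD_smult)
qed

definition Dop :: "'n::finite \<Rightarrow> 'n \<Rightarrow> (real^'n^'n \<Rightarrow> real) \<Rightarrow> real^'n^'n \<Rightarrow> real" where
  "Dop i j f Q = deriv (\<lambda>s. f (Q ** rot i j s)) 0"

lemma hasD_Dop: assumes "hasD i j f g" shows "Dop i j f = g"
proof (rule ext)
  fix Q
  have "((\<lambda>s. f (Q ** rot i j s)) has_real_derivative g (Q ** rot i j 0)) (at 0)"
    using assms unfolding hasD_def by blast
  thus "Dop i j f Q = g Q" unfolding Dop_def by (simp add: DERIV_imp_deriv rot0)
qed

lemma hasD_Xsq: "hasD i j f g \<Longrightarrow> hasD i j g g2 \<Longrightarrow> Xsq i j f Q = g2 Q"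
proof -
  assume f: "hasD i j f g" and g: "hasD i j g g2"
  have "deriv (\<lambda>s. f (Q ** rot i j s)) = (\<lambda>s. g (Q ** rot i j s))"
    using f unfolding hasD_def by (auto intro!: ext DERIV_imp_deriv)
  moreover have "((\<lambda>s. g (Q ** rot i j s)) has_real_derivative g2 (Q ** rot i j 0)) (at 0)"
    using g unfolding hasD_def by blast
  hence "deriv (\<lambda>s. g (Q ** rot i j s)) 0 = g2 Q" by (simp add: DERIV_imp_deriv rot0)
  ultimately show ?thesis unfolding Xsq_def by simp
qed

lemma poly_Dop:
  assumes "poly_fun f" "i \<noteq> j"
  shows "poly_fun (Dop i j f) \<and> hasD i j f (Dop i j f)"
  using poly_hasD[OF assms] hasD_Dop by metis

lemma poly_Xsq:
  assumes "poly_fun f" "i \<noteq> j"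
  shows "Xsq i j f = Dop i j (Dop i j f)"
proof (rule ext)
  fix Q
  have 1: "poly_fun (Dop i j f)" "hasD i j f (Dop i j f)" using poly_Dop[OF assms] by auto
  have 2: "hasD i j (Dop i j f) (Dop i j (Dop i j f))" using poly_Dop[OF 1(1) assms(2)] by auto
  show "Xsq i j f Q = Dop i j (Dop i j f) Q" by (rule hasD_Xsq[OF 1(2) 2])
qed

lemma laplacian_poly_eq:
  fixes f :: "real^'n::finite^'n \<Rightarrow> real"
  assumes "poly_fun f"
  shows "laplacian f = (\<lambda>Q. (1/4) * (\<Sum>(i,j)\<in>{(i,j). i \<noteq> j}. Dop i j (Dop i j f) Q))"
  unfolding laplacian_def
proof (intro ext arg_cong[where f="\<lambda>x. (1/4) * x"] sum.cong refl)
  fix Q and p :: "'n \<times> 'n" assume "p \<in> {(i,j). i \<noteq> j}"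
  then obtain i j where p: "p = (i,j)" "i \<noteq> j" by auto
  show "(case p of (i, j) \<Rightarrow> Xsq i j f Q) = (case p of (i, j) \<Rightarrow> Dop i j (Dop i j f) Q)"
    using p by (simp add: poly_Xsq[OF assms])
qed

lemma poly_laplacian:
  fixes f :: "real^'n::finite^'n \<Rightarrow> real"
  assumes "poly_fun f" shows "poly_fun (laplacian f)"
  unfolding laplacian_poly_eq[OF assms]
proof (intro psmult psum)
  fix p :: "'n \<times> 'n" assume "p \<in> {(i,j). i \<noteq> j}"
  then obtain i j where p: "p = (i,j)" "i \<noteq> j" by auto
  have 1: "poly_fun (Dop i j f)" using poly_Dop[OF assms p(2)] by auto
  show "poly_fun (\<lambda>Q. case p of (i, j) \<Rightarrow> Dop i j (Dop i j f) Q)"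
    using poly_Dop[OF 1 p(2)] p by simp
qed

lemma Dop_add:
  assumes "poly_fun f" "poly_fun g" "i \<noteq> j"
  shows "Dop i j (\<lambda>x. f x + g x) = (\<lambda>x. Dop i j f x + Dop i j g x)"
  by (rule hasD_Dop, rule hasD_add) (use poly_Dop assms in auto)

lemma Dop_smult:
  assumes "poly_fun f" "i \<noteq> j"
  shows "Dop i j (\<lambda>x. c * f x) = (\<lambda>x. c * Dop i j f x)"
  by (rule hasD_Dop, rule hasD_smult) (use poly_Dop assms in auto)

lemma Dop_const: "Dop i j (\<lambda>x. c) = (\<lambda>x. 0)"
  by (rule hasD_Dop, rule hasD_const)

lemma laplacian_add:
  fixes f g :: "real^'n::finite^'n \<Rightarrow> real"
  assumes "poly_fun f" "poly_fun g"
  shows "laplacian (\<lambda>x. f x + g x) = (\<lambda>x. laplacian f x + laplacian g x)"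
proof -
  have "Dop i j (Dop i j (\<lambda>x. f x + g x)) = (\<lambda>x. Dop i j (Dop i j f) x + Dop i j (Dop i j g) x)"
    if "i \<noteq> j" for i j :: 'n
    using that assms
    by (simp add: Dop_add poly_Dop)
  hence "(\<Sum>(i,j)\<in>{(i,j). i \<noteq> j}. Dop i j (Dop i j (\<lambda>x. f x + g x)) Q) =
         (\<Sum>(i,j)\<in>{(i,j::'n). i \<noteq> j}. Dop i j (Dop i j f) Q + Dop i j (Dop i j g) Q)" for Q
    by (intro sum.cong) auto
  thus ?thesis
    unfolding laplacian_poly_eq[OF assms(1)] laplacian_poly_eq[OF assms(2)]
      laplacian_poly_eq[OF padd[OF assms]]
    by (simp add: sum.distrib case_prod_beta algebra_simps)
qed

lemma laplacian_smult:
  fixes f :: "real^'n::finite^'n \<Rightarrow> real"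
  assumes "poly_fun f"
  shows "laplacian (\<lambda>x. c * f x) = (\<lambda>x. c * laplacian f x)"
proof -
  have "Dop i j (Dop i j (\<lambda>x. c * f x)) = (\<lambda>x. c * Dop i j (Dop i j f) x)"
    if "i \<noteq> j" for i j :: 'n
    using that assms
    by (simp add: Dop_smult poly_Dop)
  hence "(\<Sum>(i,j)\<in>{(i,j). i \<noteq> j}. Dop i j (Dop i j (\<lambda>x. c * f x)) Q) =
         (\<Sum>(i,j)\<in>{(i,j::'n). i \<noteq> j}. c * Dop i j (Dop i j f) Q)" for Q
    by (intro sum.cong) auto
  thus ?thesis
    unfolding laplacian_poly_eq[OF assms(1)] laplacian_poly_eq[OF psmult[OF assms]]
    by (simp add: sum_distrib_left case_prod_beta algebra_simps)
qed

lemma laplacian_const: "laplacian (\<lambda>x::real^'n::finite^'n. c) = (\<lambda>x. 0)"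
  unfolding laplacian_poly_eq[OF pconst] by (simp add: Dop_const)

lemma laplacian_sum:
  fixes f :: "'i \<Rightarrow> real^'n::finite^'n \<Rightarrow> real"
  assumes "finite I" "\<And>i. i \<in> I \<Longrightarrow> poly_fun (f i)"
  shows "laplacian (\<lambda>x. \<Sum>i\<in>I. f i x) = (\<lambda>x. \<Sum>i\<in>I. laplacian (f i) x)"
  using assms
proof (induction I rule: finite_induct)
  case empty thus ?case by (simp add: laplacian_const)
next
  case (insert k I)
  have "laplacian (\<lambda>x. \<Sum>i\<in>insert k I. f i x) = laplacian (\<lambda>x. f k x + (\<Sum>i\<in>I. f i x))"
    using insert by simp
  also have "\<dots> = (\<lambda>x. laplacian (f k) x + laplacian (\<lambda>x. \<Sum>i\<in>I. f i x) x)"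
    by (rule laplacian_add) (use insert in \<open>auto intro: psum\<close>)
  finally show ?case using insert by simp
qed

lemma L1:
  fixes u v :: "real \<Rightarrow> real"
  assumes der: "\<And>s. s > 0 \<Longrightarrow> (u has_real_derivative v s) (at s)"
    and lim: "(u \<longlongrightarrow> u0) (at_right 0)"
    and bnd: "\<And>s. 0 < s \<Longrightarrow> s \<le> T \<Longrightarrow> \<bar>v s\<bar> \<le> B"
    and t: "0 < t" "t \<le> T"
  shows "\<bar>u t - u0\<bar> \<le> t * B"
proof -
  have B0: "0 \<le> B" using bnd[OF t] by linarith
  have key: "\<bar>u t - u s\<bar> \<le> t * B" if s: "0 < s" "s < t" for s
  proof -
    have "\<And>x. s \<le> x \<Longrightarrow> x \<le> t \<Longrightarrow> (u has_real_derivative v x) (at x)"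
      using der s by auto
    then obtain z where z: "s < z" "z < t" "u t - u s = (t - s) * v z"
      using MVT2[OF s(2), of u v] by blast
    have "\<bar>v z\<bar> \<le> B" using bnd[of z] z s t by auto
    hence "\<bar>u t - u s\<bar> \<le> (t - s) * B" using z s by (simp add: abs_mult mult_left_mono)
    also have "\<dots> \<le> t * B" using B0 s by (simp add: mult_right_mono)
    finally show ?thesis .
  qed
  have "((\<lambda>s. \<bar>u t - u s\<bar>) \<longlongrightarrow> \<bar>u t - u0\<bar>) (at_right 0)"
    by (intro tendsto_intros lim)
  moreover have "eventually (\<lambda>s. \<bar>u t - u s\<bar> \<le> t * B) (at_right 0)"
    unfolding eventually_at_right_field using t key by (intro exI[of _ t]) auto
  ultimately show ?thesis by (rule tendsto_upperbound) simp
qed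

lemma L2:
  fixes u v :: "real \<Rightarrow> real"
  assumes der: "\<And>s. s > 0 \<Longrightarrow> (u has_real_derivative v s) (at s)"
    and lim: "(u \<longlongrightarrow> u0) (at_right 0)"
    and bnd: "\<And>s. 0 < s \<Longrightarrow> \<bar>v s - v0\<bar> \<le> s * B"
    and t: "0 < t"
  shows "\<bar>u t - u0 - t * v0\<bar> \<le> t^2 * B"
proof -
  have "0 \<le> t * B" using bnd[OF t] by linarith
  hence B0: "0 \<le> B" using t by (simp add: zero_le_mult_iff)
  have "\<bar>(u t - t * v0) - (u0 - 0 * v0)\<bar> \<le> t * (t * B)"
  proof (rule L1[where v="\<lambda>s. v s - v0" and T=t])
    show "((\<lambda>s. u s - s * v0) has_real_derivative v s - v0) (at s)" if "s > 0" for s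
      using der[OF that] by (auto intro!: derivative_eq_intros)
    show "((\<lambda>s. u s - s * v0) \<longlongrightarrow> u0 - 0 * v0) (at_right 0)"
      by (intro tendsto_intros lim)
    show "\<bar>v s - v0\<bar> \<le> t * B" if "0 < s" "s \<le> t" for s
      using bnd[of s] that B0 by (meson mult_right_mono order_trans)
  qed (use t in auto)
  thus ?thesis by (simp add: power2_eq_square algebra_simps)
qed




context
  fixes M :: "(real^'n::finite^'n) measure"
    and K :: "real \<Rightarrow> real^'n^'n \<Rightarrow> real^'n^'n \<Rightarrow> real"
  assumes haar: "haar_measure M" and hk: "heat_kernel M K"
begin

lemma prob: "prob_space M" using haar unfolding haar_measure_def by blast
lemma setsM: "sets M = sets borel" using haar unfolding haar_measure_def by blast
lemma measOrth: "measure M Orth = 1" using haar unfolding haar_measure_def by blast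
lemma AE_Orth: "AE x in M. x \<in> Orth" using prob_space.AE_prob_1[OF prob measOrth] .
lemma spaceM: "space M = UNIV" using sets_eq_imp_space_eq[OF setsM] by simp

lemma poly_measM: "poly_fun f \<Longrightarrow> f \<in> borel_measurable M"
  using poly_borel measurable_cong_sets[OF setsM refl] by blast

lemma poly_intM:
  assumes "poly_fun f" shows "integrable M f"
proof -
  interpret prob_space M by (rule prob)
  obtain B where B: "\<forall>Q\<in>Orth. \<bar>f Q\<bar> \<le> B" using poly_bounded[OF assms] by blast
  show ?thesis
    by (rule integrable_const_bound[where B=B]) (use AE_Orth B poly_measM[OF assms] in auto)
qed

lemma K_nonneg: "t > 0 \<Longrightarrow> x \<in> Orth \<Longrightarrow> y \<in> Orth \<Longrightarrow> K t x y \<ge> 0"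
  using hk unfolding heat_kernel_def by blast
lemma K_int: "t > 0 \<Longrightarrow> x \<in> Orth \<Longrightarrow> integrable M (K t x)"
  using hk unfolding heat_kernel_def by blast
lemma K_one: "t > 0 \<Longrightarrow> x \<in> Orth \<Longrightarrow> (\<integral>y. K t x y \<partial>M) = 1"
  using hk unfolding heat_kernel_def by blast
lemma K_meas: "t > 0 \<Longrightarrow> (\<lambda>(x,y). K t x y) \<in> borel_measurable (M \<Otimes>\<^sub>M M)"
  using hk unfolding heat_kernel_def by blast

lemma Kpoly_int:
  assumes "poly_fun \<phi>" "t > 0" "x \<in> Orth"
  shows "integrable M (\<lambda>y. K t x y * \<phi> y)"
proof -
  obtain B where B: "\<forall>Q\<in>Orth. \<bar>\<phi> Q\<bar> \<le> B" using poly_bounded[OF assms(1)] by blast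
  show ?thesis
  proof (rule Bochner_Integration.integrable_bound)
    show "integrable M (\<lambda>y. B * K t x y)" using K_int[OF assms(2,3)] by simp
    show "(\<lambda>y. K t x y * \<phi> y) \<in> borel_measurable M"
      using borel_measurable_integrable[OF K_int[OF assms(2,3)]] poly_measM[OF assms(1)]
      by measurable
    show "AE y in M. norm (K t x y * \<phi> y) \<le> norm (B * K t x y)"
      using AE_Orth
    proof eventually_elim
      case (elim y)
      have k: "K t x y \<ge> 0" using K_nonneg[OF assms(2,3) elim] .
      have "\<bar>K t x y * \<phi> y\<bar> = K t x y * \<bar>\<phi> y\<bar>" using k by (simp add: abs_mult)
      also have "\<dots> \<le> K t x y * B" using B elim k by (simp add: mult_left_mono)
      also have "\<dots> \<le> \<bar>B * K t x y\<bar>" by (metis abs_ge_self mult.commute)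
      finally show ?case by simp
    qed
  qed
qed

lemma Kpoly_bound:
  assumes "poly_fun \<phi>" "t > 0" "x \<in> Orth" "\<forall>Q\<in>Orth. \<bar>\<phi> Q\<bar> \<le> B"
  shows "\<bar>\<integral>y. K t x y * \<phi> y \<partial>M\<bar> \<le> B"
proof -
  have i1: "integrable M (\<lambda>y. K t x y * \<phi> y)" by (rule Kpoly_int[OF assms(1-3)])
  have i2: "integrable M (\<lambda>y. B * K t x y)" using K_int[OF assms(2,3)] by simp
  have i3: "integrable M (\<lambda>y. - B * K t x y)" using K_int[OF assms(2,3)] by simp
  have "(\<integral>y. K t x y * \<phi> y \<partial>M) \<le> (\<integral>y. B * K t x y \<partial>M)"
    using AE_Orth
  proof (intro integral_mono_AE[OF i1 i2], eventually_elim)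
    case (elim y)
    have "\<phi> y \<le> B" using assms(4) \<open>y \<in> Orth\<close> by force
    thus ?case using K_nonneg[OF assms(2,3) \<open>y \<in> Orth\<close>] by (simp add: mult.commute mult_right_mono)
  qed
  moreover have "(\<integral>y. - B * K t x y \<partial>M) \<le> (\<integral>y. K t x y * \<phi> y \<partial>M)"
    using AE_Orth
  proof (intro integral_mono_AE[OF i3 i1], eventually_elim)
    case (elim y)
    have "- B \<le> \<phi> y" using assms(4) \<open>y \<in> Orth\<close> by force
    hence "(- B) * K t x y \<le> \<phi> y * K t x y"
      using K_nonneg[OF assms(2,3) \<open>y \<in> Orth\<close>] by (rule mult_right_mono)
    thus ?case by (simp add: mult.commute)
  qed
  moreover have "(\<integral>y. B * K t x y \<partial>M) = B" "(\<integral>y. - B * K t x y \<partial>M) = - B"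
    using K_one[OF assms(2,3)] by simp_all
  ultimately show ?thesis by linarith
qed

lemma heat_poly:
  assumes "poly_fun \<phi>" "x \<in> Orth"
  shows "(\<forall>t>0. ((\<lambda>s. \<integral>y. K s x y * \<phi> y \<partial>M) has_real_derivative (\<integral>y. K t x y * laplacian \<phi> y \<partial>M)) (at t)) \<and>
         ((\<lambda>s. \<integral>y. K s x y * \<phi> y \<partial>M) \<longlongrightarrow> \<phi> x) (at_right 0)"
  using assms(1)
proof induction
  case (pmono f)
  thus ?case using hk assms(2) unfolding heat_kernel_def by blast
next
  case (padd f g)
  let ?U = "\<lambda>h s. \<integral>y. K s x y * h y \<partial>M"
  have eq: "?U (\<lambda>x. f x + g x) s = ?U f s + ?U g s" if "s > 0" for s
    using Kpoly_int[OF padd.hyps(1) that assms(2)] Kpoly_int[OF padd.hyps(2) that assms(2)]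
    by (simp add: distrib_left)
  have lapeq: "(\<integral>y. K t x y * laplacian (\<lambda>x. f x + g x) y \<partial>M) = ?U (laplacian f) t + ?U (laplacian g) t"
    if "t > 0" for t
    using Kpoly_int[OF poly_laplacian[OF padd.hyps(1)] that assms(2)]
      Kpoly_int[OF poly_laplacian[OF padd.hyps(2)] that assms(2)]
    by (simp add: laplacian_add[OF padd.hyps(1,2)] distrib_left)
  show ?case
  proof (intro conjI allI impI)
    fix t :: real assume t: "t > 0"
    have "((\<lambda>s. ?U f s + ?U g s) has_real_derivative ?U (laplacian f) t + ?U (laplacian g) t) (at t)"
      using padd.IH t by (intro DERIV_add) auto
    hence "(?U (\<lambda>x. f x + g x) has_real_derivative ?U (laplacian f) t + ?U (laplacian g) t) (at t)"
      by (rule has_field_derivative_transform_within_open[where S="{0<..}"]) (use t eq in auto)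
    thus "(?U (\<lambda>x. f x + g x) has_real_derivative (\<integral>y. K t x y * laplacian (\<lambda>x. f x + g x) y \<partial>M)) (at t)"
      using lapeq[OF t] by simp
  next
    have lim: "((\<lambda>s. ?U f s + ?U g s) \<longlongrightarrow> f x + g x) (at_right 0)"
      using padd.IH by (intro tendsto_add) auto
    have ev: "eventually (\<lambda>s. ?U f s + ?U g s = ?U (\<lambda>x. f x + g x) s) (at_right 0)"
      by (rule eventually_mono[OF eventually_at_right_less]) (simp add: eq)
    show "(?U (\<lambda>x. f x + g x) \<longlongrightarrow> f x + g x) (at_right 0)"
      using tendsto_cong[OF ev] lim by simp
  qed
next
  case (psmult f c)
  let ?U = "\<lambda>h s. \<integral>y. K s x y * h y \<partial>M"
  have eq: "?U (\<lambda>x. c * f x) s = c * ?U f s" for s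
    by (simp add: mult.left_commute)
  have lapeq: "(\<integral>y. K t x y * laplacian (\<lambda>x. c * f x) y \<partial>M) = c * ?U (laplacian f) t" for t
    by (simp add: laplacian_smult[OF psmult.hyps(1)] mult.left_commute)
  show ?case
  proof (intro conjI allI impI)
    fix t :: real assume t: "t > 0"
    have "((\<lambda>s. c * ?U f s) has_real_derivative c * ?U (laplacian f) t) (at t)"
      using psmult.IH t by (intro DERIV_cmult) auto
    thus "(?U (\<lambda>x. c * f x) has_real_derivative (\<integral>y. K t x y * laplacian (\<lambda>x. c * f x) y \<partial>M)) (at t)"
      using lapeq[of t] eq by simp
  next
    have "((\<lambda>s. c * ?U f s) \<longlongrightarrow> c * f x) (at_right 0)"
      using psmult.IH by (intro tendsto_mult) auto
    thus "(?U (\<lambda>x. c * f x) \<longlongrightarrow> c * f x) (at_right 0)" using eq by simp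
  qed
qed

lemma taylor:
  assumes "poly_fun \<phi>" "x \<in> Orth" "\<forall>Q\<in>Orth. \<bar>laplacian (laplacian \<phi>) Q\<bar> \<le> B" "t > 0"
  shows "\<bar>(\<integral>y. K t x y * \<phi> y \<partial>M) - \<phi> x - t * laplacian \<phi> x\<bar> \<le> t^2 * B"
proof -
  have p1: "poly_fun (laplacian \<phi>)" using poly_laplacian[OF assms(1)] .
  have p2: "poly_fun (laplacian (laplacian \<phi>))" using poly_laplacian[OF p1] .
  note h0 = heat_poly[OF assms(1,2)] and h1 = heat_poly[OF p1 assms(2)]
  have v: "\<bar>(\<integral>y. K s x y * laplacian \<phi> y \<partial>M) - laplacian \<phi> x\<bar> \<le> s * B" if "s > 0" for s
    by (rule L1[where T=s and v="\<lambda>s. \<integral>y. K s x y * laplacian (laplacian \<phi>) y \<partial>M"])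
       (use h1 that Kpoly_bound[OF p2 _ assms(2,3)] in auto)
  show ?thesis
    by (rule L2[where v="\<lambda>s. \<integral>y. K s x y * laplacian \<phi> y \<partial>M"]) (use h0 v assms(4) in auto)
qed

lemma taylor_shift:
  fixes A :: "real^'n^'n" and k :: nat
  assumes k: "k \<ge> 1"
  shows "\<exists>C. \<forall>x\<in>Orth. \<forall>t>0.
    \<bar>(\<integral>y. K t x y * (trace (A ** y) - trace (A ** x))^k \<partial>M)
       - t * laplacian (\<lambda>y. (trace (A ** y) - trace (A ** x))^k) x\<bar> \<le> t^2 * C"
proof -
  define W where "W = (\<lambda>y::real^'n^'n. trace (A ** y))"
  have W_eq: "W = (\<lambda>y. \<Sum>a\<in>UNIV. \<Sum>b\<in>UNIV. A$a$b * y$b$a)"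
    by (simp add: W_def trace_def matrix_matrix_mult_def[abs_def])
  have pW: "poly_fun W" unfolding W_eq by (intro psum psmult pcoord)
  have pWj: "poly_fun (\<lambda>y. W y ^ j)" for j using ppow[OF pW] .
  obtain C0 where C0: "\<forall>Q\<in>Orth. \<bar>W Q\<bar> \<le> C0" using poly_bounded[OF pW] by blast
  have "\<forall>j. \<exists>B. \<forall>Q\<in>Orth. \<bar>laplacian (laplacian (\<lambda>y. W y ^ j)) Q\<bar> \<le> B"
    using poly_bounded[OF poly_laplacian[OF poly_laplacian[OF pWj]]] by blast
  then obtain B where B: "\<And>j (Q::real^'n^'n). Q \<in> Orth \<Longrightarrow> \<bar>laplacian (laplacian (\<lambda>y. W y ^ j)) Q\<bar> \<le> B j"
    by metis
  define C where "C = (\<Sum>j\<le>k. real (k choose j) * C0^(k-j) * \<bar>B j\<bar>)"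
  show ?thesis
  proof (intro exI[of _ C] ballI allI impI)
    fix x :: "real^'n^'n" and t :: real
    assume x: "x \<in> Orth" and t: "t > 0"
    define w where "w = W x"
    define c where "c = (\<lambda>j. real (k choose j) * (- w)^(k-j))"
    have phi: "(\<lambda>y. (trace (A ** y) - trace (A ** x))^k) = (\<lambda>y. \<Sum>j\<le>k. c j * W y ^ j)"
    proof
      fix y
      have "(trace (A ** y) - trace (A ** x))^k = (W y + (- w))^k" by (simp add: W_def w_def)
      also have "\<dots> = (\<Sum>j\<le>k. c j * W y ^ j)"
        unfolding binomial_ring c_def by (intro sum.cong) (auto simp: algebra_simps)
      finally show "(trace (A ** y) - trace (A ** x))^k = (\<Sum>j\<le>k. c j * W y ^ j)" .
    qed
    have pphi: "poly_fun (\<lambda>y. \<Sum>j\<le>k. c j * W y ^ j)" by (intro psum psmult pWj)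
    have lap1: "laplacian (\<lambda>y. \<Sum>j\<le>k. c j * W y ^ j) = (\<lambda>y. \<Sum>j\<le>k. c j * laplacian (\<lambda>y. W y ^ j) y)"
      by (subst laplacian_sum) (auto intro: psmult pWj simp: laplacian_smult[OF pWj])
    have lap2: "laplacian (laplacian (\<lambda>y. \<Sum>j\<le>k. c j * W y ^ j))
        = (\<lambda>y. \<Sum>j\<le>k. c j * laplacian (laplacian (\<lambda>y. W y ^ j)) y)"
      unfolding lap1
      by (subst laplacian_sum)
         (auto intro: psmult poly_laplacian pWj simp: laplacian_smult[OF poly_laplacian[OF pWj]])
    have bnd: "\<forall>Q\<in>Orth. \<bar>laplacian (laplacian (\<lambda>y. \<Sum>j\<le>k. c j * W y ^ j)) Q\<bar> \<le> C"
    proof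
      fix Q :: "real^'n^'n" assume Q: "Q \<in> Orth"
      have "\<bar>\<Sum>j\<le>k. c j * laplacian (laplacian (\<lambda>y. W y ^ j)) Q\<bar>
          \<le> (\<Sum>j\<le>k. \<bar>c j * laplacian (laplacian (\<lambda>y. W y ^ j)) Q\<bar>)" by (rule sum_abs)
      also have "\<dots> \<le> C" unfolding C_def
      proof (rule sum_mono)
        fix j assume "j \<in> {..k}"
        have w0: "\<bar>w\<bar> \<le> C0" using C0 x by (simp add: w_def)
        have "\<bar>c j\<bar> \<le> real (k choose j) * C0^(k-j)"
          unfolding c_def abs_mult by (auto simp: power_abs intro!: mult_left_mono power_mono w0)
        moreover have "\<bar>laplacian (laplacian (\<lambda>y. W y ^ j)) Q\<bar> \<le> \<bar>B j\<bar>" using B[OF Q, of j] by linarith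
        ultimately show "\<bar>c j * laplacian (laplacian (\<lambda>y. W y ^ j)) Q\<bar> \<le> real (k choose j) * C0^(k-j) * \<bar>B j\<bar>"
          unfolding abs_mult by (intro mult_mono) auto
      qed
      finally show "\<bar>laplacian (laplacian (\<lambda>y. \<Sum>j\<le>k. c j * W y ^ j)) Q\<bar> \<le> C" unfolding lap2 .
    qed
    have "\<bar>(\<integral>y. K t x y * (\<Sum>j\<le>k. c j * W y ^ j) \<partial>M) - (\<Sum>j\<le>k. c j * W x ^ j)
          - t * laplacian (\<lambda>y. \<Sum>j\<le>k. c j * W y ^ j) x\<bar> \<le> t^2 * C"
      by (rule taylor[OF pphi x bnd t])
    moreover have "(\<Sum>j\<le>k. c j * W x ^ j) = 0"
      using fun_cong[OF phi, of x] k by (simp add: power_0_left)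
    ultimately show "\<bar>(\<integral>y. K t x y * (trace (A ** y) - trace (A ** x))^k \<partial>M)
       - t * laplacian (\<lambda>y. (trace (A ** y) - trace (A ** x))^k) x\<bar> \<le> t^2 * C"
      unfolding phi using fun_cong[OF phi] by simp
  qed
qed

end



definition hW :: "real^'n::finite^'n \<Rightarrow> 'n \<Rightarrow> 'n \<Rightarrow> real^'n^'n \<Rightarrow> real" where
  "hW A i j y = (\<Sum>a\<in>UNIV. \<Sum>b\<in>UNIV. A$a$b * dcoord i j b a y)"

lemma trace_eq: "trace (A ** y) = (\<Sum>a\<in>UNIV. \<Sum>b\<in>UNIV. A$a$b * y$b$a)"
  by (simp add: trace_def matrix_matrix_mult_def)

lemma poly_W: "poly_fun (\<lambda>y::real^'n::finite^'n. trace (A ** y))"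
  unfolding trace_eq by (intro psum psmult pcoord)

lemma poly_hW: "poly_fun (hW A i j)"
  unfolding hW_def[abs_def] by (intro psum psmult poly_dcoord)

lemma hasD_eq: "hasD i j f g \<Longrightarrow> f = f' \<Longrightarrow> g = g' \<Longrightarrow> hasD i j f' g'"
  by simp

lemma hasD_psi:
  fixes A :: "real^'n::finite^'n"
  assumes "i \<noteq> j"
  shows "hasD i j (\<lambda>y. trace (A ** y) - w) (hW A i j)"
proof (rule hasD_eq)
  show "hasD i j (\<lambda>y. (\<Sum>a\<in>UNIV. \<Sum>b\<in>UNIV. A$a$b * y$b$a) + (- w))
          (\<lambda>y. (\<Sum>a\<in>UNIV. \<Sum>b\<in>UNIV. A$a$b * dcoord i j b a y) + 0)"
    by (intro hasD_add hasD_sum hasD_smult hasD_coord hasD_const assms)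
qed (auto simp: trace_eq hW_def[abs_def])

lemma Xsq_sq:
  assumes f: "hasD i j f g" and g: "hasD i j g g2"
  shows "Xsq i j (\<lambda>y. f y * f y) Q = 2 * (g Q)^2 + 2 * f Q * g2 Q"
proof -
  have 1: "hasD i j (\<lambda>y. f y * f y) (\<lambda>y. g y * f y + f y * g y)" by (rule hasD_mult[OF f f])
  have 2: "hasD i j (\<lambda>y. g y * f y + f y * g y)
     (\<lambda>y. (g2 y * f y + g y * g y) + (g y * g y + f y * g2 y))"
    by (intro hasD_add hasD_mult f g)
  show ?thesis using hasD_Xsq[OF 1 2, of Q] by (simp add: power2_eq_square algebra_simps)
qed

lemma lap_sq_at:
  fixes A :: "real^'n::finite^'n"
  shows "laplacian (\<lambda>y. (trace (A ** y) - trace (A ** x))^2) x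
     = (1/2) * (\<Sum>(i,j)\<in>{(i,j). i \<noteq> j}. (hW A i j x)^2)"
proof -
  let ?psi = "\<lambda>y. trace (A ** y) - trace (A ** x)"
  have "Xsq i j (\<lambda>y. (trace (A ** y) - trace (A ** x))^2) x = 2 * (hW A i j x)^2"
    if ij: "i \<noteq> j" for i j
  proof -
    obtain g2 where g2: "hasD i j (hW A i j) g2" using poly_hasD[OF poly_hW ij] by blast
    have "Xsq i j (\<lambda>y. ?psi y * ?psi y) x = 2 * (hW A i j x)^2 + 2 * ?psi x * g2 x"
      by (rule Xsq_sq[OF hasD_psi[OF that] g2])
    thus ?thesis by (simp add: power2_eq_square)
  qed
  hence "(\<Sum>(i,j)\<in>{(i,j). i \<noteq> j}. Xsq i j (\<lambda>y. (trace (A ** y) - trace (A ** x))^2) x)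
      = (\<Sum>(i,j)\<in>{(i,j::'n). i \<noteq> j}. 2 * (hW A i j x)^2)"
    by (intro sum.cong) auto
  thus ?thesis unfolding laplacian_def by (simp add: sum_distrib_left[symmetric] case_prod_beta)
qed

lemma lap_4_at:
  fixes A :: "real^'n::finite^'n"
  shows "laplacian (\<lambda>y. (trace (A ** y) - trace (A ** x))^4) x = 0"
proof -
  let ?psi = "\<lambda>y. trace (A ** y) - trace (A ** x)"
  let ?f = "\<lambda>y. ?psi y * ?psi y"
  have "Xsq i j (\<lambda>y. (trace (A ** y) - trace (A ** x))^4) x = 0"
    if ij: "i \<noteq> j" for i j
  proof -
    let ?G = "\<lambda>y. hW A i j y * ?psi y + ?psi y * hW A i j y"
    have f: "hasD i j ?f ?G" by (rule hasD_mult[OF hasD_psi[OF that] hasD_psi[OF that]])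
    have pG: "poly_fun ?G"
      by (intro padd pmult poly_hW pdiff poly_W pconst)
    obtain G2 where G2: "hasD i j ?G G2" using poly_hasD[OF pG ij] by blast
    have "Xsq i j (\<lambda>y. ?f y * ?f y) x = 2 * (?G x)^2 + 2 * ?f x * G2 x"
      by (rule Xsq_sq[OF f G2])
    moreover have "(\<lambda>y. ?f y * ?f y) = (\<lambda>y. (trace (A ** y) - trace (A ** x))^4)"
      by (simp add: fun_eq_iff power4_eq_xxxx algebra_simps)
    ultimately show ?thesis by simp
  qed
  thus ?thesis unfolding laplacian_def by (intro mult_eq_0_iff[THEN iffD2] disjI2 sum.neutral) auto
qed




lemma dsum: "(\<Sum>a\<in>(UNIV::'n::finite set). \<Sum>b\<in>(UNIV::'m::finite set). if a = j then (F a b::real) else 0) = (\<Sum>b\<in>UNIV. F j b)"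
proof -
  have "(\<Sum>a\<in>(UNIV::'n set). \<Sum>b\<in>(UNIV::'m set). if a = j then F a b else 0) = (\<Sum>a\<in>(UNIV::'n set). if a = j then (\<Sum>b\<in>UNIV. F a b) else 0)"
    by (intro sum.cong) auto
  thus ?thesis by simp
qed

lemma dsum2: "(\<Sum>b\<in>(UNIV::'m::finite set). \<Sum>a\<in>(UNIV::'n::finite set). if a = j then (F b a::real) else 0) = (\<Sum>b\<in>UNIV. F b j)"
  by (intro sum.cong) auto

lemma hW_eq:
  fixes A :: "real^'n::finite^'n"
  shows "hW A i j y = (\<Sum>b\<in>UNIV. A$j$b * y$b$i) - (\<Sum>b\<in>UNIV. A$i$b * y$b$j)"
proof -
  have e: "\<And>a b. A$a$b * ((if a = j then y$b$i else 0) - (if a = i then y$b$j else 0)) = (if a = j then A$a$b*y$b$i else 0) - (if a = i then A$a$b * y$b$j else 0)" by simp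
  have "hW A i j y = (\<Sum>a\<in>UNIV. \<Sum>b\<in>UNIV. A$a$b * ((if a = j then y$b$i else 0) - (if a = i then y$b$j else 0)))"
    by (simp add: hW_def dcoord_def)
  also have "\<dots> = (\<Sum>a\<in>UNIV. \<Sum>b\<in>UNIV. if a = j then A$a$b * y$b$i else 0) - (\<Sum>a\<in>UNIV. \<Sum>b\<in>UNIV. if a = i then A$a$b * y$b$j else 0)"
    by (simp only: e sum_subtractf)
  finally show ?thesis by (simp only: dsum)
qed

definition alpha :: "real^'n::finite^'n \<Rightarrow> 'n \<Rightarrow> 'n \<Rightarrow> 'n \<times> 'n \<Rightarrow> real" where
  "alpha A i j p = (if snd p = i then A$j$(fst p) else 0) - (if snd p = j then A$i$(fst p) else 0)"

lemma hW_alpha: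
  fixes A :: "real^'n::finite^'n"
  shows "hW A i j y = (\<Sum>p\<in>UNIV. alpha A i j p * y $ fst p $ snd p)"
proof -
  have e: "\<And>b c. alpha A i j (b,c) * y$b$c = (if c = i then A$j$b * y$b$c else 0) - (if c = j then A$i$b * y$b$c else 0)"
    by (simp add: alpha_def)
  have "(\<Sum>p\<in>UNIV. alpha A i j p * y $ fst p $ snd p) = (\<Sum>b\<in>UNIV. \<Sum>c\<in>UNIV. alpha A i j (b,c) * y$b$c)"
    unfolding UNIV_Times_UNIV[symmetric] sum.cartesian_product' by simp
  also have "\<dots> = (\<Sum>b\<in>UNIV. \<Sum>c\<in>UNIV. if c = i then A$j$b * y$b$c else 0) - (\<Sum>b\<in>UNIV. \<Sum>c\<in>UNIV. if c = j then A$i$b * y$b$c else 0)"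
    by (simp only: e sum_subtractf)
  also have "\<dots> = hW A i j y" by (simp only: dsum2 hW_eq)
  finally show ?thesis by simp
qed

lemma alpha_sq:
  fixes A :: "real^'n::finite^'n"
  assumes "i \<noteq> j"
  shows "(\<Sum>p\<in>UNIV. (alpha A i j p)^2) = (\<Sum>b\<in>UNIV. (A$j$b)^2) + (\<Sum>b\<in>UNIV. (A$i$b)^2)"
proof -
  have e: "\<And>b c. (alpha A i j (b,c))^2 = (if c = i then (A$j$b)^2 else 0) + (if c = j then (A$i$b)^2 else 0)"
    using assms by (simp add: alpha_def power2_eq_square)
  have "(\<Sum>p\<in>UNIV. (alpha A i j p)^2) = (\<Sum>b\<in>UNIV. \<Sum>c\<in>UNIV. (alpha A i j (b,c))^2)"
    unfolding UNIV_Times_UNIV[symmetric] sum.cartesian_product' by simp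
  also have "\<dots> = (\<Sum>b\<in>UNIV. \<Sum>c\<in>UNIV. if c = i then (A$j$b)^2 else 0) + (\<Sum>b\<in>UNIV. \<Sum>c\<in>UNIV. if c = j then (A$i$b)^2 else 0)"
    by (simp only: e sum.distrib)
  also have "\<dots> = (\<Sum>b\<in>UNIV. (A$j$b)^2) + (\<Sum>b\<in>UNIV. (A$i$b)^2)" by (simp only: dsum2)
  finally show ?thesis .
qed

definition diagm :: "('n::finite \<Rightarrow> real) \<Rightarrow> real^'n^'n" where
  "diagm d = (\<chi> k l. if k = l then d k else 0)"

lemma diagm_mult: "(diagm d ** y) $ k $ l = d k * y$k$l"
proof -
  have "(diagm d ** y) $ k $ l = (\<Sum>m\<in>UNIV. (if k = m then d k * y$m$l else 0))"
    unfolding matrix_matrix_mult_def diagm_def vec_lambda_beta by (intro sum.cong) auto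
  thus ?thesis by simp
qed

lemma diagm_orth:
  assumes "\<And>k. d k * d k = 1" shows "diagm d \<in> Orth"
proof -
  have t: "Finite_Cartesian_Product.transpose (diagm d) = diagm d"
    by (simp add: vec_eq_iff transpose_def diagm_def)
  have "diagm d ** diagm d = mat 1"
    by (simp add: vec_eq_iff diagm_mult mat_def) (simp add: diagm_def assms)
  thus ?thesis unfolding Orth_def orthogonal_matrix by (simp add: t)
qed

definition pm :: "('n::finite \<Rightarrow> 'n) \<Rightarrow> real^'n^'n" where
  "pm \<sigma> = (\<chi> k l. if l = \<sigma> k then 1 else 0)"

lemma pm_mult: "(pm \<sigma> ** y) $ k $ l = y $ (\<sigma> k) $ l"
proof -
  have "(pm \<sigma> ** y) $ k $ l = (\<Sum>m\<in>UNIV. (if m = \<sigma> k then y$m$l else 0))"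
    unfolding matrix_matrix_mult_def pm_def vec_lambda_beta by (intro sum.cong) auto
  thus ?thesis by simp
qed

lemma pm_orth:
  assumes "\<And>k. \<sigma> (\<sigma> k) = k" shows "pm \<sigma> \<in> Orth"
proof -
  have t: "Finite_Cartesian_Product.transpose (pm \<sigma>) = pm \<sigma>"
    by (simp add: vec_eq_iff transpose_def pm_def) (metis assms)
  have "pm \<sigma> ** pm \<sigma> = mat 1"
    by (simp add: vec_eq_iff pm_mult mat_def) (simp add: pm_def assms eq_commute)
  thus ?thesis unfolding Orth_def orthogonal_matrix by (simp add: t)
qed




context
  fixes M :: "(real^'n::finite^'n) measure"
  assumes haar: "haar_measure M"
begin

lemma probH: "prob_space M" using haar unfolding haar_measure_def by blast
lemma setsH: "sets M = sets borel" using haar unfolding haar_measure_def by blast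
lemma measOrthH: "measure M Orth = 1" using haar unfolding haar_measure_def by blast
lemma AE_OrthH: "AE x in M. x \<in> Orth" using prob_space.AE_prob_1[OF probH measOrthH] .

lemma poly_measH: "poly_fun f \<Longrightarrow> f \<in> borel_measurable M"
  using poly_borel measurable_cong_sets[OF setsH refl] by blast

lemma poly_intH:
  assumes "poly_fun f" shows "integrable M f"
proof -
  interpret prob_space M by (rule probH)
  obtain B where B: "\<forall>Q\<in>Orth. \<bar>f Q\<bar> \<le> B" using poly_bounded[OF assms] by blast
  show ?thesis
    by (rule integrable_const_bound[where B=B]) (use AE_OrthH B poly_measH[OF assms] in auto)
qed

lemma integral_constH: "(\<integral>y. c \<partial>M) = (c::real)"
proof -
  interpret prob_space M by (rule probH)
  show ?thesis by (simp add: prob_space)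
qed

lemma left_inv:
  fixes f :: "real^'n^'n \<Rightarrow> real"
  assumes g: "g \<in> Orth" and f: "f \<in> borel_measurable borel"
  shows "(\<integral>y. f (g ** y) \<partial>M) = (\<integral>y. f y \<partial>M)"
proof -
  have T: "(\<lambda>x. g ** x) \<in> M \<rightarrow>\<^sub>M M"
  proof -
    have "continuous_on UNIV (\<lambda>x::real^'n^'n. g ** x)"
      unfolding matrix_matrix_mult_def by (intro continuous_on_vec_lambda continuous_intros)
    hence "(\<lambda>x::real^'n^'n. g ** x) \<in> borel \<rightarrow>\<^sub>M borel" by (rule borel_measurable_continuous_onI)
    thus ?thesis using measurable_cong_sets[OF setsH setsH] by simp
  qed
  have fM: "f \<in> borel_measurable M" using f measurable_cong_sets[OF setsH refl] by blast
  have "distr M M (\<lambda>x. g ** x) = M" using haar g unfolding haar_measure_def by blast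
  hence "(\<integral>y. f y \<partial>M) = (\<integral>y. f y \<partial>(distr M M (\<lambda>x. g ** x)))" by simp
  also have "\<dots> = (\<integral>y. f (g ** y) \<partial>M)" by (rule integral_distr[OF T fM])
  finally show ?thesis by simp
qed

lemma coord2_borel: "(\<lambda>y::real^'n^'n. y$b$c * y$d$e) \<in> borel_measurable borel"
  by (intro poly_borel pmult pcoord)

lemma coord2_int: "integrable M (\<lambda>y::real^'n^'n. y$b$c * y$d$e)"
  by (intro poly_intH pmult pcoord)

lemma mom_off:
  assumes "b \<noteq> d"
  shows "(\<integral>y. y$b$c * y$d$e \<partial>M) = 0"
proof -
  define g where "g = diagm (\<lambda>k::'n. if k = b then -1 else (1::real))"
  have g: "g \<in> Orth" unfolding g_def by (rule diagm_orth) auto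
  have "(\<integral>y. (g ** y)$b$c * (g ** y)$d$e \<partial>M) = (\<integral>y. y$b$c * y$d$e \<partial>M)"
    by (rule left_inv[OF g coord2_borel])
  moreover have "(\<lambda>y. (g ** y)$b$c * (g ** y)$d$e) = (\<lambda>y. - (y$b$c * y$d$e))"
    using assms by (simp add: g_def diagm_mult)
  ultimately show ?thesis by simp
qed

lemma mom_perm:
  "(\<integral>y. y$b$c * y$b$e \<partial>M) = (\<integral>y. y$b'$c * y$b'$e \<partial>M)"
proof -
  define \<sigma> where "\<sigma> = (\<lambda>k::'n. if k = b then b' else if k = b' then b else k)"
  have g: "pm \<sigma> \<in> Orth" unfolding \<sigma>_def by (rule pm_orth) auto
  have "(\<integral>y. (pm \<sigma> ** y)$b$c * (pm \<sigma> ** y)$b$e \<partial>M) = (\<integral>y. y$b$c * y$b$e \<partial>M)"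
    by (rule left_inv[OF g coord2_borel])
  moreover have "(\<lambda>y. (pm \<sigma> ** y)$b$c * (pm \<sigma> ** y)$b$e) = (\<lambda>y. y$b'$c * y$b'$e)"
    by (simp add: \<sigma>_def pm_mult)
  ultimately show ?thesis by simp
qed

lemma mom_diag:
  "(\<integral>y. y$b$c * y$b$e \<partial>M) = (if c = e then 1 else 0) / real CARD('n)"
proof -
  have "(\<Sum>b'\<in>UNIV. \<integral>y. y$b'$c * y$b'$e \<partial>M) = (\<integral>y. (\<Sum>b'\<in>UNIV. y$b'$c * y$b'$e) \<partial>M)"
    by (rule Bochner_Integration.integral_sum[symmetric]) (rule coord2_int)
  also have "\<dots> = (\<integral>y. (if c = e then 1 else 0) \<partial>M)"
  proof (rule integral_cong_AE)
    show "(\<lambda>y. \<Sum>b'\<in>UNIV. y $ b' $ c * y $ b' $ e) \<in> borel_measurable M"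
      by (intro poly_measH psum pmult pcoord)
    show "(\<lambda>y. if c = e then 1 else 0 :: real) \<in> borel_measurable M" by simp
    show "AE y in M. (\<Sum>b'\<in>UNIV. y $ b' $ c * y $ b' $ e) = (if c = e then 1 else 0)"
      using AE_OrthH
    proof eventually_elim
      case (elim y)
      hence "Finite_Cartesian_Product.transpose y ** y = mat 1"
        unfolding Orth_def orthogonal_matrix by simp
      hence "(Finite_Cartesian_Product.transpose y ** y) $ c $ e = (mat 1 :: real^'n^'n) $ c $ e" by simp
      thus ?case by (simp add: matrix_matrix_mult_def Finite_Cartesian_Product.transpose_def mat_def)
    qed
  qed
  also have "\<dots> = (if c = e then 1 else 0)" by (rule integral_constH)
  finally have s: "(\<Sum>b'\<in>UNIV. \<integral>y. y$b'$c * y$b'$e \<partial>M) = (if c = e then 1 else 0)" .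
  have "(\<Sum>b'\<in>(UNIV::'n set). \<integral>y. y$b'$c * y$b'$e \<partial>M) = real CARD('n) * (\<integral>y. y$b$c * y$b$e \<partial>M)"
  proof -
    have "(\<Sum>b'\<in>(UNIV::'n set). \<integral>y. y$b'$c * y$b'$e \<partial>M) = (\<Sum>b'\<in>(UNIV::'n set). \<integral>y. y$b$c * y$b$e \<partial>M)"
      by (intro sum.cong refl) (rule mom_perm)
    thus ?thesis by simp
  qed
  thus ?thesis using s by (simp add: field_simps)
qed

lemma mom:
  "(\<integral>y. y$b$c * y$d$e \<partial>M) = (if b = d \<and> c = e then 1 / real CARD('n) else 0)"
  by (cases "b = d") (auto simp: mom_off mom_diag)

lemma quad:
  fixes \<alpha> :: "'n \<times> 'n \<Rightarrow> real"
  shows "(\<integral>y. (\<Sum>p\<in>UNIV. \<alpha> p * y $ fst p $ snd p)^2 \<partial>M) = (\<Sum>p\<in>UNIV. (\<alpha> p)^2) / real CARD('n)"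
proof -
  have sq: "(\<Sum>p\<in>UNIV. \<alpha> p * y $ fst p $ snd p)^2
      = (\<Sum>p\<in>UNIV. \<Sum>q\<in>UNIV. (\<alpha> p * \<alpha> q) * (y $ fst p $ snd p * y $ fst q $ snd q))" for y :: "real^'n^'n"
    unfolding power2_eq_square sum_product by (simp add: algebra_simps)
  have "(\<integral>y. (\<Sum>p\<in>UNIV. \<alpha> p * y $ fst p $ snd p)^2 \<partial>M)
     = (\<integral>y. (\<Sum>p\<in>UNIV. \<Sum>q\<in>UNIV. (\<alpha> p * \<alpha> q) * (y $ fst p $ snd p * y $ fst q $ snd q)) \<partial>M)"
    by (simp only: sq)
  also have "\<dots> = (\<Sum>p\<in>UNIV. \<integral>y. (\<Sum>q\<in>UNIV. (\<alpha> p * \<alpha> q) * (y $ fst p $ snd p * y $ fst q $ snd q)) \<partial>M)"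
    by (rule Bochner_Integration.integral_sum) (auto intro!: coord2_int)
  also have "\<dots> = (\<Sum>p\<in>UNIV. \<Sum>q\<in>UNIV. \<integral>y. (\<alpha> p * \<alpha> q) * (y $ fst p $ snd p * y $ fst q $ snd q) \<partial>M)"
    by (intro sum.cong refl Bochner_Integration.integral_sum) (auto intro!: coord2_int)
  also have "\<dots> = (\<Sum>p\<in>UNIV. \<Sum>q\<in>UNIV. (\<alpha> p * \<alpha> q) * (if p = q then 1 / real CARD('n) else 0))"
    by (intro sum.cong refl) (auto simp: mom prod_eq_iff)
  also have "\<dots> = (\<Sum>p\<in>UNIV. (\<alpha> p)^2 / real CARD('n))"
    by (intro sum.cong refl) (simp add: power2_eq_square if_distrib cong: if_cong)
  also have "\<dots> = (\<Sum>p\<in>UNIV. (\<alpha> p)^2) / real CARD('n)" by (simp add: sum_divide_distrib)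
  finally show ?thesis .
qed

end



definition Gam :: "real^'n::finite^'n \<Rightarrow> real^'n^'n \<Rightarrow> real" where
  "Gam A x = (1/2) * (\<Sum>(i,j)\<in>{(i,j). i \<noteq> j}. (hW A i j x)^2)"

lemma poly_Gam: "poly_fun (Gam A)"
  unfolding Gam_def[abs_def] case_prod_beta
  by (intro psmult psum ppow poly_hW)

lemma pair_sum:
  fixes r :: "'n::finite \<Rightarrow> real"
  shows "(\<Sum>p\<in>{(i,j). i \<noteq> j}. r (snd p) + r (fst p)) = 2 * (real CARD('n) - 1) * (\<Sum>i\<in>UNIV. r i)"
proof -
  have P: "{(i,j). i \<noteq> j} = Sigma (UNIV::'n set) (\<lambda>i. UNIV - {i})" by auto
  have "(\<Sum>p\<in>{(i,j). i \<noteq> j}. r (snd p) + r (fst p)) = (\<Sum>i\<in>UNIV. \<Sum>j\<in>UNIV - {i}. r j + r i)"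
    unfolding P by (subst sum.Sigma) (auto simp: case_prod_beta)
  also have "\<dots> = (\<Sum>i\<in>UNIV. ((\<Sum>j\<in>UNIV. r j) - r i) + (real CARD('n) - 1) * r i)"
  proof (intro sum.cong refl)
    fix i
    have c: "card (UNIV - {i::'n}) = CARD('n) - 1" by (simp add: card_Diff_singleton)
    have "CARD('n) \<ge> 1" by (simp add: Suc_leI)
    hence c': "real (card (UNIV - {i::'n})) = real CARD('n) - 1" using c by (simp add: of_nat_diff)
    show "(\<Sum>j\<in>UNIV - {i}. r j + r i) = ((\<Sum>j\<in>UNIV. r j) - r i) + (real CARD('n) - 1) * r i"
      by (simp add: sum.distrib sum_diff1 c')
  qed
  also have "\<dots> = real CARD('n) * (\<Sum>i\<in>UNIV. r i) - (\<Sum>i\<in>UNIV. r i) + (real CARD('n) - 1) * (\<Sum>i\<in>UNIV. r i)"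
    by (simp add: sum.distrib sum_subtractf sum_distrib_left)
  also have "\<dots> = 2 * (real CARD('n) - 1) * (\<Sum>i\<in>UNIV. r i)"
    by (simp add: algebra_simps)
  finally show ?thesis .
qed

lemma E_Gam:
  fixes M :: "(real^'n::finite^'n) measure" and A :: "real^'n^'n"
  assumes haar: "haar_measure M" and tr: "trace (A ** transpose A) = real CARD('n)"
  shows "(\<integral>x. Gam A x \<partial>M) = real CARD('n) - 1"
proof -
  let ?n = "real CARD('n)"
  define r where "r = (\<lambda>i. \<Sum>b\<in>UNIV. (A$i$b)^2)"
  have R: "(\<Sum>i\<in>UNIV. r i) = ?n"
    using tr by (simp add: r_def trace_def matrix_matrix_mult_def Finite_Cartesian_Product.transpose_def power2_eq_square)
  have int: "integrable M (\<lambda>x. (hW A (fst p) (snd p) x)^2)" for p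
    by (intro poly_intH[OF haar] ppow poly_hW)
  have each: "(\<integral>x. (hW A (fst p) (snd p) x)^2 \<partial>M) = (r (snd p) + r (fst p)) / ?n"
    if "p \<in> {(i,j). i \<noteq> j}" for p
  proof -
    have ij: "fst p \<noteq> snd p" using that by auto
    have "(\<integral>x. (hW A (fst p) (snd p) x)^2 \<partial>M) = (\<integral>x. (\<Sum>q\<in>UNIV. alpha A (fst p) (snd p) q * x $ fst q $ snd q)^2 \<partial>M)"
      by (simp only: hW_alpha)
    also have "\<dots> = (\<Sum>q\<in>UNIV. (alpha A (fst p) (snd p) q)^2) / ?n" by (rule quad[OF haar])
    also have "\<dots> = (r (snd p) + r (fst p)) / ?n" by (simp add: alpha_sq[OF ij] r_def)
    finally show ?thesis .
  qed
  have "(\<integral>x. Gam A x \<partial>M) = (\<integral>x. (1/2) * (\<Sum>p\<in>{(i,j). i \<noteq> j}. (hW A (fst p) (snd p) x)^2) \<partial>M)"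
    by (simp add: Gam_def case_prod_beta)
  also have "\<dots> = (1/2) * (\<integral>x. (\<Sum>p\<in>{(i,j). i \<noteq> j}. (hW A (fst p) (snd p) x)^2) \<partial>M)" by simp
  also have "\<dots> = (1/2) * (\<Sum>p\<in>{(i,j). i \<noteq> j}. \<integral>x. (hW A (fst p) (snd p) x)^2 \<partial>M)"
    by (subst Bochner_Integration.integral_sum) (use int in auto)
  also have "\<dots> = (1/2) * (\<Sum>p\<in>{(i,j). i \<noteq> j}. (r (snd p) + r (fst p)) / ?n)"
    by (simp add: each)
  also have "\<dots> = (1/2) * (2 * (?n - 1) * ?n / ?n)"
    by (simp add: sum_divide_distrib[symmetric] pair_sum R)
  also have "\<dots> = ?n - 1" by simp
  finally show ?thesis .
qed




lemma cube_ineq: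
  fixes d s :: real assumes s: "s > 0"
  shows "\<bar>d\<bar>^3 \<le> s/2 * d^2 + d^4 / (2 * s)"
proof -
  define a where "a = \<bar>d\<bar>"
  have a2: "d^2 = a^2" and a4: "d^4 = a^4" unfolding a_def
    by (simp_all add: power_even_abs_numeral)
  have "0 \<le> a^2 * (s - a)^2" by simp
  hence "2 * s * a^3 \<le> s^2*a^2 + a^4"
    by (simp add: power2_eq_square power3_eq_cube power4_eq_xxxx algebra_simps)
  hence "a^3 \<le> s/2 * a^2 + a^4 / (2 * s)" using s by (simp add: field_simps power2_eq_square)
  thus ?thesis unfolding a2 a4 a_def .
qed

lemma outer_bound:
  fixes F :: "'a \<Rightarrow> real"
  assumes "prob_space M" "AE x in M. \<bar>F x\<bar> \<le> B" "F \<in> borel_measurable M"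
  shows "integrable M F \<and> \<bar>\<integral>x. F x \<partial>M\<bar> \<le> B"
proof -
  interpret prob_space M by (rule assms(1))
  have i: "integrable M F" by (rule integrable_const_bound[where B=B]) (use assms in auto)
  have "\<bar>\<integral>x. F x \<partial>M\<bar> \<le> (\<integral>x. \<bar>F x\<bar> \<partial>M)" by (rule integral_abs_bound)
  also have "\<dots> \<le> (\<integral>x. B \<partial>M)"
    by (rule integral_mono_AE) (use i assms(2) in auto)
  also have "\<dots> = B" by (simp add: prob_space)
  finally show ?thesis using i by simp
qed

lemma meas_inner:
  fixes M :: "(real^'n::finite^'n) measure" and A :: "real^'n^'n" and h :: "real \<Rightarrow> real"
  assumes haar: "haar_measure M" and hk: "heat_kernel M K" and t: "t > 0"
    and h: "h \<in> borel_measurable borel"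
  shows "(\<lambda>x. \<integral>y. h (trace (A ** y) - trace (A ** x)) * K t x y \<partial>M) \<in> borel_measurable M"
proof -
  have W[measurable]: "(\<lambda>y. trace (A ** y)) \<in> borel_measurable M"
    by (rule poly_measH[OF haar poly_W])
  have Kt[measurable]: "(\<lambda>(x,y). K t x y) \<in> borel_measurable (M \<Otimes>\<^sub>M M)"
    by (rule K_meas[OF haar hk t])
  have [measurable]: "h \<in> borel_measurable borel" by (rule h)
  have "(\<lambda>(x,y). h (trace (A ** y) - trace (A ** x)) * K t x y) \<in> borel_measurable (M \<Otimes>\<^sub>M M)"
    by measurable
  thus ?thesis
    by (rule sigma_finite_measure.borel_measurable_lebesgue_integral[OF prob_space_imp_sigma_finite[OF probH[OF haar]]])
qed

theorem mainTheorem7: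
  fixes A :: "real^'n::finite^'n"
    and M :: "(real^'n^'n) measure"
    and K :: "real \<Rightarrow> real^'n^'n \<Rightarrow> real^'n^'n \<Rightarrow> real"
  assumes "CARD('n) \<ge> 4"
    and "trace (A ** transpose A) = real CARD('n)"
    and "haar_measure M"
    and "heat_kernel M K"
  shows "((\<lambda>t. (\<integral>x. (\<integral>y. (trace (A ** y) - trace (A ** x)) ^ 2 * K t x y \<partial>M) \<partial>M)
              - t * (real CARD('n) - 1)) \<in> O[at_right 0](\<lambda>t. t ^ 2) \<and>
         (\<lambda>t. \<integral>x. (\<integral>y. (trace (A ** y) - trace (A ** x)) ^ 4 * K t x y \<partial>M) \<partial>M)
           \<in> O[at_right 0](\<lambda>t. t ^ 2) \<and>
         (\<lambda>t. \<integral>x. (\<integral>y. \<bar>trace (A ** y) - trace (A ** x)\<bar> ^ 3 * K t x y \<partial>M) \<partial>M)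
           \<in> O[at_right 0](\<lambda>t. t powr (3/2)))"
proof -
  note haar = assms(3) and hk = assms(4)
  have prob: "prob_space M" by (rule probH[OF haar])
  let ?n = "real CARD('n)"
  define F where "F = (\<lambda>k t x. \<integral>y. (trace (A ** y) - trace (A ** x)) ^ k * K t x y \<partial>M)"
  define F3 where "F3 = (\<lambda>t x. \<integral>y. \<bar>trace (A ** y) - trace (A ** x)\<bar> ^ 3 * K t x y \<partial>M)"
  have pd: "poly_fun (\<lambda>y. (trace (A ** y) - trace (A ** x))^k)" for x k
    by (intro ppow pdiff poly_W pconst)
  have intk: "integrable M (\<lambda>y. (trace (A ** y) - trace (A ** x))^k * K t x y)"
    if "x \<in> Orth" "t > 0" for x t k
    using Kpoly_int[OF haar hk pd that(2,1)] by (simp add: mult.commute)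
  have Fswap: "F k t x = (\<integral>y. K t x y * (trace (A ** y) - trace (A ** x))^k \<partial>M)" for k t x
    by (simp add: F_def mult.commute)
  obtain C2 where C2: "\<And>x t. x \<in> Orth \<Longrightarrow> t > 0 \<Longrightarrow> \<bar>F 2 t x - t * Gam A x\<bar> \<le> t^2 * C2"
  proof -
    obtain C where C: "\<forall>x\<in>Orth. \<forall>t>0. \<bar>(\<integral>y. K t x y * (trace (A ** y) - trace (A ** x))^2 \<partial>M)
       - t * laplacian (\<lambda>y. (trace (A ** y) - trace (A ** x))^2) x\<bar> \<le> t^2 * C"
      using taylor_shift[OF haar hk, of 2 A] by auto
    show ?thesis by (rule that[of C]) (use C in \<open>auto simp: Fswap lap_sq_at Gam_def\<close>)
  qed
  obtain C4 where C4: "\<And>x t. x \<in> Orth \<Longrightarrow> t > 0 \<Longrightarrow> \<bar>F 4 t x\<bar> \<le> t^2 * C4"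
  proof -
    obtain C where C: "\<forall>x\<in>Orth. \<forall>t>0. \<bar>(\<integral>y. K t x y * (trace (A ** y) - trace (A ** x))^4 \<partial>M)
       - t * laplacian (\<lambda>y. (trace (A ** y) - trace (A ** x))^4) x\<bar> \<le> t^2 * C"
      using taylor_shift[OF haar hk, of 4 A] by auto
    show ?thesis by (rule that[of C]) (use C in \<open>auto simp: Fswap lap_4_at\<close>)
  qed
  obtain BG where BG: "\<And>Q. Q \<in> Orth \<Longrightarrow> \<bar>Gam A Q\<bar> \<le> BG"
    using poly_bounded[OF poly_Gam] by blast
  have F2bd: "\<bar>F 2 t x\<bar> \<le> t * \<bar>BG\<bar> + t^2 * C2" if "x \<in> Orth" "t > 0" for x t
  proof -
    have "\<bar>t * Gam A x\<bar> \<le> t * \<bar>BG\<bar>"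
      using BG[OF that(1)] that(2) by (simp add: abs_mult mult_left_mono)
    thus ?thesis using C2[OF that] by linarith
  qed
  have Kmeas: "K t x \<in> borel_measurable M" if "x \<in> Orth" "t > 0" for x t
    by (rule borel_measurable_integrable[OF K_int[OF haar hk that(2,1)]])
  have Wmeas: "(\<lambda>y. trace (A ** y)) \<in> borel_measurable M" by (rule poly_measH[OF haar poly_W])
  have F3bd: "\<bar>F3 t x\<bar> \<le> t powr (3/2) * (\<bar>BG\<bar> + \<bar>C2\<bar> + \<bar>C4\<bar>)"
    if x: "x \<in> Orth" and t: "t > 0" "t \<le> 1" for x t
  proof -
    define s where "s = sqrt t"
    have s: "s > 0" using t by (simp add: s_def)
    have ts: "t = s * s" using t by (simp add: s_def)
    have int3: "integrable M (\<lambda>y. \<bar>trace (A ** y) - trace (A ** x)\<bar> ^ 3 * K t x y)"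
    proof (rule Bochner_Integration.integrable_bound)
      show "integrable M (\<lambda>y. (trace (A ** y) - trace (A ** x))^3 * K t x y)" by (rule intk[OF x t(1)])
      show "(\<lambda>y. \<bar>trace (A ** y) - trace (A ** x)\<bar> ^ 3 * K t x y) \<in> borel_measurable M"
        using Wmeas Kmeas[OF x t(1)] by measurable
      show "AE y in M. norm (\<bar>trace (A ** y) - trace (A ** x)\<bar> ^ 3 * K t x y)
            \<le> norm ((trace (A ** y) - trace (A ** x))^3 * K t x y)"
        using AE_OrthH[OF haar]
      proof eventually_elim
        case (elim y)
        have "K t x y \<ge> 0" by (rule K_nonneg[OF haar hk t(1) x elim])
        thus ?case by (simp add: abs_mult power_abs)
      qed
    qed
    have nn: "0 \<le> F3 t x"
      unfolding F3_def
      by (rule integral_nonneg_AE) (use AE_OrthH[OF haar] K_nonneg[OF haar hk t(1) x] in \<open>auto elim!: eventually_mono\<close>)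
    have "F3 t x \<le> (\<integral>y. s/2 * ((trace (A ** y) - trace (A ** x))^2 * K t x y)
                      + ((trace (A ** y) - trace (A ** x))^4 * K t x y) / (2 * s) \<partial>M)"
      unfolding F3_def
    proof (rule integral_mono_AE[OF int3])
      show "integrable M (\<lambda>y. s/2 * ((trace (A ** y) - trace (A ** x))^2 * K t x y)
                      + ((trace (A ** y) - trace (A ** x))^4 * K t x y) / (2 * s))"
        using intk[OF x t(1)] by auto
      show "AE y in M. \<bar>trace (A ** y) - trace (A ** x)\<bar> ^ 3 * K t x y
            \<le> s/2 * ((trace (A ** y) - trace (A ** x))^2 * K t x y)
                      + ((trace (A ** y) - trace (A ** x))^4 * K t x y) / (2 * s)"
        using AE_OrthH[OF haar]
      proof eventually_elim
        case (elim y)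
        have k: "K t x y \<ge> 0" by (rule K_nonneg[OF haar hk t(1) x elim])
        have "\<bar>trace (A ** y) - trace (A ** x)\<bar> ^ 3 * K t x y
            \<le> (s/2 * (trace (A ** y) - trace (A ** x))^2 + (trace (A ** y) - trace (A ** x))^4 / (2 * s)) * K t x y"
          by (rule mult_right_mono[OF cube_ineq[OF s] k])
        thus ?case by (simp add: algebra_simps)
      qed
    qed
    also have "\<dots> = s/2 * F 2 t x + F 4 t x / (2 * s)"
      unfolding F_def by (subst Bochner_Integration.integral_add) (use intk[OF x t(1)] in auto)
    also have "\<dots> \<le> s/2 * (t * (\<bar>BG\<bar> + \<bar>C2\<bar>)) + (t^2 * \<bar>C4\<bar>) / (2 * s)"
    proof (intro add_mono mult_left_mono divide_right_mono)
      have "t^2 * C2 \<le> t * \<bar>C2\<bar>"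
      proof -
        have "t^2 * C2 \<le> t^2 * \<bar>C2\<bar>" by (simp add: mult_left_mono)
        also have "\<dots> \<le> t * \<bar>C2\<bar>" using t by (simp add: power2_eq_square mult_right_mono)
        finally show ?thesis .
      qed
      thus "F 2 t x \<le> t * (\<bar>BG\<bar> + \<bar>C2\<bar>)" using F2bd[OF x t(1)] by (simp add: algebra_simps)
      show "F 4 t x \<le> t^2 * \<bar>C4\<bar>" using C4[OF x t(1)] by (smt (verit) mult_left_mono zero_le_power2 abs_ge_self)
    qed (use s in auto)
    also have "\<dots> = t * s * ((\<bar>BG\<bar> + \<bar>C2\<bar>) / 2 + \<bar>C4\<bar> / 2)"
      using s unfolding ts by (simp add: field_simps power2_eq_square)
    also have "\<dots> \<le> t * s * (\<bar>BG\<bar> + \<bar>C2\<bar> + \<bar>C4\<bar>)"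
      using s t by (intro mult_left_mono) (simp_all add: field_simps)
    also have "t * s = t powr (3/2)"
    proof -
      have "t powr (3/2) = t * t powr (1/2)" using powr_add[of t 1 "1/2"] t by simp
      also have "\<dots> = t * s" using t by (simp add: s_def powr_half_sqrt)
      finally show ?thesis by simp
    qed
    finally show ?thesis using nn by simp
  qed
  have mF: "(\<lambda>x. F k t x) \<in> borel_measurable M" if "t > 0" for k t
    unfolding F_def
    by (rule meas_inner[OF haar hk that, where h="\<lambda>d. d^k"]) (intro borel_measurable_continuous_onI continuous_intros)
  have mF3: "(\<lambda>x. F3 t x) \<in> borel_measurable M" if "t > 0" for t
    unfolding F3_def
    by (rule meas_inner[OF haar hk that, where h="\<lambda>d. \<bar>d\<bar>^3"]) (intro borel_measurable_continuous_onI continuous_intros)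
  have mGam: "Gam A \<in> borel_measurable M" by (rule poly_measH[OF haar poly_Gam])
  have iGam: "integrable M (Gam A)" by (rule poly_intH[OF haar poly_Gam])
  have P1: "\<bar>(\<integral>x. F 2 t x \<partial>M) - t * (?n - 1)\<bar> \<le> t^2 * C2" if t: "t > 0" for t
  proof -
    have ae1: "AE x in M. \<bar>F 2 t x\<bar> \<le> t * \<bar>BG\<bar> + t^2 * C2"
      using AE_OrthH[OF haar] by eventually_elim (rule F2bd[OF _ t])
    have iF2: "integrable M (\<lambda>x. F 2 t x)"
      using outer_bound[OF prob ae1 mF[OF t]] by blast
    have ae2: "AE x in M. \<bar>F 2 t x - t * Gam A x\<bar> \<le> t^2 * C2"
      using AE_OrthH[OF haar] by eventually_elim (rule C2[OF _ t])
    have mD: "(\<lambda>x. F 2 t x - t * Gam A x) \<in> borel_measurable M"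
      using mF[OF t] mGam by measurable
    have D: "\<bar>\<integral>x. F 2 t x - t * Gam A x \<partial>M\<bar> \<le> t^2 * C2"
      using outer_bound[OF prob ae2 mD] by blast
    have "(\<integral>x. F 2 t x - t * Gam A x \<partial>M) = (\<integral>x. F 2 t x \<partial>M) - t * (\<integral>x. Gam A x \<partial>M)"
      using iF2 iGam by simp
    also have "\<dots> = (\<integral>x. F 2 t x \<partial>M) - t * (?n - 1)"
      using E_Gam[OF haar assms(2)] by simp
    finally show ?thesis using D by simp
  qed
  have P2: "\<bar>\<integral>x. F 4 t x \<partial>M\<bar> \<le> t^2 * C4" if t: "t > 0" for t
  proof -
    have ae: "AE x in M. \<bar>F 4 t x\<bar> \<le> t^2 * C4"
      using AE_OrthH[OF haar] by eventually_elim (rule C4[OF _ t])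
    show ?thesis using outer_bound[OF prob ae mF[OF t]] by blast
  qed
  have P3: "\<bar>\<integral>x. F3 t x \<partial>M\<bar> \<le> t powr (3/2) * (\<bar>BG\<bar> + \<bar>C2\<bar> + \<bar>C4\<bar>)" if t: "t > 0" "t \<le> 1" for t
  proof -
    have ae: "AE x in M. \<bar>F3 t x\<bar> \<le> t powr (3/2) * (\<bar>BG\<bar> + \<bar>C2\<bar> + \<bar>C4\<bar>)"
      using AE_OrthH[OF haar] by eventually_elim (rule F3bd[OF _ t])
    show ?thesis using outer_bound[OF prob ae mF3[OF t(1)]] by blast
  qed
  have O1: "(\<lambda>t. (\<integral>x. F 2 t x \<partial>M) - t * (?n - 1)) \<in> O[at_right 0](\<lambda>t. t ^ 2)"
  proof (rule bigoI[where c="\<bar>C2\<bar>"])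
    show "\<forall>\<^sub>F t in at_right 0. norm ((\<integral>x. F 2 t x \<partial>M) - t * (?n - 1)) \<le> \<bar>C2\<bar> * norm (t^2)"
    proof (rule eventually_mono[OF eventually_at_right_less])
      fix t :: real assume t: "0 < t"
      have "t^2 * C2 \<le> \<bar>C2\<bar> * t^2" by (simp add: mult.commute mult_right_mono)
      thus "norm ((\<integral>x. F 2 t x \<partial>M) - t * (?n - 1)) \<le> \<bar>C2\<bar> * norm (t^2)"
        using P1[OF t] by simp
    qed
  qed
  have O2: "(\<lambda>t. \<integral>x. F 4 t x \<partial>M) \<in> O[at_right 0](\<lambda>t. t ^ 2)"
  proof (rule bigoI[where c="\<bar>C4\<bar>"])
    show "\<forall>\<^sub>F t in at_right 0. norm (\<integral>x. F 4 t x \<partial>M) \<le> \<bar>C4\<bar> * norm (t^2)"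
    proof (rule eventually_mono[OF eventually_at_right_less])
      fix t :: real assume t: "0 < t"
      have "t^2 * C4 \<le> \<bar>C4\<bar> * t^2" by (simp add: mult.commute mult_right_mono)
      thus "norm (\<integral>x. F 4 t x \<partial>M) \<le> \<bar>C4\<bar> * norm (t^2)"
        using P2[OF t] by simp
    qed
  qed
  have O3: "(\<lambda>t. \<integral>x. F3 t x \<partial>M) \<in> O[at_right 0](\<lambda>t. t powr (3/2))"
  proof (rule bigoI[where c="\<bar>BG\<bar> + \<bar>C2\<bar> + \<bar>C4\<bar>"])
    have ev: "\<forall>\<^sub>F t in at_right (0::real). 0 < t \<and> t \<le> 1"
      unfolding eventually_at_right_field by (intro exI[of _ 1]) auto
    show "\<forall>\<^sub>F t in at_right 0. norm (\<integral>x. F3 t x \<partial>M) \<le> (\<bar>BG\<bar> + \<bar>C2\<bar> + \<bar>C4\<bar>) * norm (t powr (3/2))"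
    proof (rule eventually_mono[OF ev])
      fix t :: real assume t: "0 < t \<and> t \<le> 1"
      thus "norm (\<integral>x. F3 t x \<partial>M) \<le> (\<bar>BG\<bar> + \<bar>C2\<bar> + \<bar>C4\<bar>) * norm (t powr (3/2))"
        using P3[of t] by (simp add: mult.commute)
    qed
  qed
  show ?thesis using O1 O2 O3 unfolding F_def F3_def by blast
qed


end
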